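(* Let $s\ge1$ and let $\mathcal{G}_{2s}\subset GL_{2s}(\mathbb{Z})$ be the group generated by the linear maps $\sigma_1,\dotsc,\sigma_{2s}$ of $\mathbb{Z}^{2s}$ given in coordinates $k=(k_1,\dotsc,k_{2s})$ by \[ \sigma_1:\ k_1\mapsto k_1,\quad k_j\mapsto k_j+k_1\ (j>1); \] \[ \sigma_i\ (2\le i\le 2s):\ k_{i-1}\mapsto 2k_{i-1}-k_i,\quad k_i\mapsto k_{i-1},\quad k_j\mapsto k_j\ (j\ne i-1,i). \] For a nonzero $k\in\mathbb{Z}^{2s}$ put $\gamma=\gcd(k_1,\dotsc,k_{2s})$, $\alpha=\#\{i:\ k_i/\gamma\equiv1\pmod 2\}$ and $\delta=|2\alpha-2s-1|$. Then $\delta$ (and $\gamma$) are invariant under the action of $\mathcal{G}_{2s}$: for every $g\in\mathcal{G}_{2s}$ and every nonzero $k$, the vectors $k$ and $gk$ have the same value of $\delta$. *)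

theory Defs
  imports Main
begin

text \<open>Vectors of Z^n are represented as functions nat => int, coordinates 1..n,
  vanishing outside {1..n}.\<close>

definition zvec :: "nat \<Rightarrow> (nat \<Rightarrow> int) set" where
  "zvec n = {k. \<forall>j. j \<notin> {1..n} \<longrightarrow> k j = 0}"

definition sigma :: "nat \<Rightarrow> nat \<Rightarrow> (nat \<Rightarrow> int) \<Rightarrow> (nat \<Rightarrow> int)" where
  "sigma n i k =
     (if i = 1 then (\<lambda>j. if 2 \<le> j \<and> j \<le> n then k j + k 1 else k j)
      else (\<lambda>j. if j = i - 1 then 2 * k (i - 1) - k i
                else if j = i then k (i - 1) else k j))"

inductive_set Ggroup :: "nat \<Rightarrow> ((nat \<Rightarrow> int) \<Rightarrow> (nat \<Rightarrow> int)) set" for n where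
  gen: "1 \<le> i \<Longrightarrow> i \<le> n \<Longrightarrow> sigma n i \<in> Ggroup n"
| ident: "id \<in> Ggroup n"
| comp: "g \<in> Ggroup n \<Longrightarrow> h \<in> Ggroup n \<Longrightarrow> g \<circ> h \<in> Ggroup n"
| inverse: "g \<in> Ggroup n \<Longrightarrow> inv_into (zvec n) g \<in> Ggroup n"

definition gam :: "nat \<Rightarrow> (nat \<Rightarrow> int) \<Rightarrow> int" where
  "gam n k = Gcd (k ` {1..n})"

definition alph :: "nat \<Rightarrow> (nat \<Rightarrow> int) \<Rightarrow> nat" where
  "alph n k = card {i \<in> {1..n}. k i div gam n k mod 2 = 1}"

definition delt :: "nat \<Rightarrow> (nat \<Rightarrow> int) \<Rightarrow> int" where
  "delt n k = \<bar>2 * int (alph n k) - int n - 1\<bar>"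

end

theory Submission imports Defs begin

lemma Gcd_eqI':
  fixes A B :: "int set"
  assumes "\<And>d. (\<forall>x\<in>A. d dvd x) \<longleftrightarrow> (\<forall>x\<in>B. d dvd x)"
  shows "Gcd A = Gcd B"
proof -
  have 1: "Gcd A dvd Gcd B" using assms[of "Gcd A"] by (simp add: Gcd_dvd Gcd_greatest)
  have 2: "Gcd B dvd Gcd A" using assms[of "Gcd B"] by (simp add: Gcd_dvd Gcd_greatest)
  show ?thesis using 1 2 by (simp add: zdvd_antisym_nonneg)
qed

lemma gam_sigma1:
  assumes "2 \<le> n" shows "gam n (sigma n 1 k) = gam n k"
  unfolding gam_def
proof (rule Gcd_eqI')
  fix d :: int
  have "(\<forall>j\<in>{1..n}. d dvd sigma n 1 k j) \<longleftrightarrow> (\<forall>j\<in>{1..n}. d dvd k j)"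
  proof
    assume H: "\<forall>j\<in>{1..n}. d dvd sigma n 1 k j"
    have d1: "d dvd k 1" using H[rule_format, of 1] assms by (simp add: sigma_def)
    show "\<forall>j\<in>{1..n}. d dvd k j"
    proof
      fix j assume j: "j \<in> {1..n}"
      show "d dvd k j"
      proof (cases "j = 1")
        case True then show ?thesis using d1 by simp
      next
        case False
        then have "d dvd k j + k 1" using H[rule_format, OF j] j by (simp add: sigma_def)
        then show ?thesis using d1 by (simp add: dvd_add_left_iff)
      qed
    qed
  next
    assume H: "\<forall>j\<in>{1..n}. d dvd k j"
    then show "\<forall>j\<in>{1..n}. d dvd sigma n 1 k j"
      using assms by (auto simp: sigma_def)
  qed
  then show "(\<forall>x\<in>sigma n 1 k ` {1..n}. d dvd x) = (\<forall>x\<in>k ` {1..n}. d dvd x)" by simp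
qed

lemma sigma_i: "i \<noteq> 1 \<Longrightarrow> sigma n i k j = (if j = i - 1 then 2 * k (i - 1) - k i
                else if j = i then k (i - 1) else k j)"
  by (simp add: sigma_def)

lemma gam_sigmai:
  assumes "2 \<le> i" "i \<le> n" shows "gam n (sigma n i k) = gam n k"
  unfolding gam_def
proof (rule Gcd_eqI')
  fix d :: int
  have ne: "i \<noteq> 1" "i \<noteq> i - 1" "i - 1 \<noteq> i" "i - 1 \<in> {1..n}" "i \<in> {1..n}" using assms by auto
  have "(\<forall>j\<in>{1..n}. d dvd sigma n i k j) \<longleftrightarrow> (\<forall>j\<in>{1..n}. d dvd k j)"
  proof
    assume H: "\<forall>j\<in>{1..n}. d dvd sigma n i k j"
    have a: "d dvd k (i - 1)" using H[rule_format, of i] assms ne by (simp add: sigma_i ne(1))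
    have b: "d dvd 2 * k (i - 1) - k i" using H[rule_format, of "i - 1"] ne by (simp add: sigma_i ne(1))
    have a2: "d dvd 2 * k (i - 1)" using a by simp
    have "d dvd 2 * k (i - 1) - (2 * k (i - 1) - k i)" using a2 b by (rule dvd_diff)
    then have c: "d dvd k i" by simp
    show "\<forall>j\<in>{1..n}. d dvd k j"
    proof
      fix j assume j: "j \<in> {1..n}"
      show "d dvd k j"
      proof (cases "j = i \<or> j = i - 1")
        case True then show ?thesis using a c by auto
      next
        case False
        then show ?thesis using H[rule_format, OF j] assms by (simp add: sigma_i ne(1))
      qed
    qed
  next
    assume H: "\<forall>j\<in>{1..n}. d dvd k j"
    have a: "d dvd k (i - 1)" "d dvd k i" using H ne(4,5) by auto
    show "\<forall>j\<in>{1..n}. d dvd sigma n i k j"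
    proof
      fix j assume j: "j \<in> {1..n}"
      show "d dvd sigma n i k j" unfolding sigma_i[OF ne(1)] using a H j by simp
    qed
  qed
  then show "(\<forall>x\<in>sigma n i k ` {1..n}. d dvd x) = (\<forall>x\<in>k ` {1..n}. d dvd x)" by simp
qed

lemma bij_sigma1:
  assumes "2 \<le> n" shows "bij_betw (sigma n 1) (zvec n) (zvec n)"
proof (rule bij_betw_byWitness[where f' = "\<lambda>k j. if 2 \<le> j \<and> j \<le> n then k j - k 1 else k j"])
  have s1: "\<And>k. sigma n 1 k 1 = k 1" by (simp add: sigma_def)
  show "\<forall>a\<in>zvec n. (\<lambda>j. if 2 \<le> j \<and> j \<le> n then sigma n 1 a j - sigma n 1 a 1 else sigma n 1 a j) = a"
    by (simp add: s1 fun_eq_iff) (simp add: sigma_def)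
  show "\<forall>a\<in>zvec n. sigma n 1 (\<lambda>j. if 2 \<le> j \<and> j \<le> n then a j - a 1 else a j) = a"
    by (simp add: sigma_def fun_eq_iff)
  show "sigma n 1 ` zvec n \<subseteq> zvec n" by (auto simp: sigma_def zvec_def)
  show "(\<lambda>k j. if 2 \<le> j \<and> j \<le> n then k j - k 1 else k j) ` zvec n \<subseteq> zvec n"
    by (auto simp: zvec_def)
qed

lemma bij_sigmai:
  assumes "2 \<le> i" "i \<le> n" shows "bij_betw (sigma n i) (zvec n) (zvec n)"
proof (rule bij_betw_byWitness[where f' = "\<lambda>k j. if j = i - 1 then k i else if j = i then 2 * k i - k (i - 1) else k j"])
  have ne: "i \<noteq> 1" "i \<noteq> i - 1" "i - 1 \<noteq> i" "i - 1 \<in> {1..n}" "i \<in> {1..n}" using assms by auto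
  show "\<forall>a\<in>zvec n. (\<lambda>j. if j = i - 1 then sigma n i a i else if j = i then 2 * sigma n i a i - sigma n i a (i - 1) else sigma n i a j) = a"
    using ne by (auto simp: sigma_i fun_eq_iff)
  show "\<forall>a\<in>zvec n. sigma n i (\<lambda>j. if j = i - 1 then a i else if j = i then 2 * a i - a (i - 1) else a j) = a"
    using ne by (auto simp: sigma_i fun_eq_iff)
  show "sigma n i ` zvec n \<subseteq> zvec n" using ne by (auto simp: sigma_i zvec_def)
  show "(\<lambda>k j. if j = i - 1 then k i else if j = i then 2 * k i - k (i - 1) else k j) ` zvec n \<subseteq> zvec n"
    using ne by (auto simp: zvec_def)
qed

lemma card_split1:
  "card {j\<in>{1..n::nat}. P j} = (if P 1 \<and> 1 \<le> n then 1 else 0) + card {j\<in>{2..n}. P j}"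
proof (cases "P 1 \<and> 1 \<le> n")
  case True
  then have "{j\<in>{1..n}. P j} = insert 1 {j\<in>{2..n}. P j}" by auto
  then show ?thesis using True by simp
next
  case False
  have h: "\<And>x::nat. 1 \<le> x \<Longrightarrow> x \<noteq> 1 \<Longrightarrow> 2 \<le> x" by arith
  have "{j\<in>{1..n}. P j} = {j\<in>{2..n}. P j}" using False h by fastforce
  then show ?thesis using False by simp
qed

lemma card_compl_split:
  assumes "finite A" shows "card {j\<in>A. P j} + card {j\<in>A. \<not> P j} = card A"
proof -
  have "A = {j\<in>A. P j} \<union> {j\<in>A. \<not> P j}" by auto
  then have "card A = card ({j\<in>A. P j} \<union> {j\<in>A. \<not> P j})" by simp
  also have "\<dots> = card {j\<in>A. P j} + card {j\<in>A. \<not> P j}"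
    by (rule card_Un_disjoint) (use assms in auto)
  finally show ?thesis by simp
qed

lemma alph_q:
  "alph n k = card {j\<in>{1..n}. odd (k j div gam n k)}"
  unfolding alph_def by (simp add: odd_iff_mod_2_eq_one)

lemma delt_sigma1:
  assumes "2 \<le> n" shows "delt n (sigma n 1 k) = delt n k"
proof (cases "gam n k = 0")
  case True
  then have "alph n (sigma n 1 k) = 0" "alph n k = 0" using gam_sigma1[OF assms] by (auto simp: alph_def)
  thus ?thesis by (simp add: delt_def)
next
  case False
  define c where "c = gam n k"
  have dv: "c dvd k j" if "j \<in> {1..n}" for j unfolding c_def gam_def by (rule Gcd_dvd) (use that in auto)
  define q where "q j = k j div c" for j
  have qs: "sigma n 1 k j div c = q j + q 1" if "j \<in> {2..n}" for j
    using dv[of j] dv[of 1] that assms by (simp add: sigma_def q_def)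
  have q1: "sigma n 1 k 1 div c = q 1" by (simp add: sigma_def q_def)
  have A: "alph n k = card {j\<in>{1..n}. odd (q j)}" unfolding alph_q q_def c_def ..
  have A': "alph n (sigma n 1 k) = card {j\<in>{1..n}. odd (sigma n 1 k j div c)}"
    unfolding alph_q gam_sigma1[OF assms] c_def ..
  define a where "a = card {j\<in>{2..n}. odd (q j)}"
  define b where "b = card {j\<in>{2..n}. \<not> odd (q j)}"
  have ab: "a + b + 1 = n" unfolding a_def b_def using card_compl_split[of "{2..n}" "\<lambda>j. odd (q j)"] assms by simp
  have e1: "alph n k = (if odd (q 1) then 1 else 0) + a" unfolding A a_def
    by (subst card_split1) (use assms in simp)
  have e2: "alph n (sigma n 1 k) = (if odd (q 1) then 1 + b else a)"
  proof -
    have "alph n (sigma n 1 k) = (if odd (q 1) then 1 else 0) + card {j\<in>{2..n}. odd (sigma n 1 k j div c)}"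
      unfolding A' by (subst card_split1) (use assms q1 in simp)
    also have "{j\<in>{2..n}. odd (sigma n 1 k j div c)} = {j\<in>{2..n}. odd (q j + q 1)}"
      using qs by auto
    also have "card {j\<in>{2..n}. odd (q j + q 1)} = (if odd (q 1) then b else a)"
      unfolding a_def b_def by (cases "odd (q 1)") auto
    finally show ?thesis by simp
  qed
  show ?thesis unfolding delt_def e1 e2 using ab by auto
qed

lemma delt_sigmai:
  assumes "2 \<le> i" "i \<le> n" shows "delt n (sigma n i k) = delt n k"
proof (cases "gam n k = 0")
  case True
  then have "alph n (sigma n i k) = 0" "alph n k = 0" using gam_sigmai[OF assms] by (auto simp: alph_def)
  thus ?thesis by (simp add: delt_def)
next
  case False
  have ne: "i \<noteq> 1" "i \<noteq> i - 1" "i - 1 \<noteq> i" "i - 1 \<in> {1..n}" "i \<in> {1..n}" using assms by auto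
  define c where "c = gam n k"
  have dv: "c dvd k j" if "j \<in> {1..n}" for j unfolding c_def gam_def by (rule Gcd_dvd) (use that in auto)
  define q where "q j = k j div c" for j
  define t where "t j = (if j = i - 1 then i else if j = i then i - 1 else j)" for j
  have tt: "t (t j) = j" for j unfolding t_def using ne by auto
  have tr: "t j \<in> {1..n}" if "j \<in> {1..n}" for j unfolding t_def using ne that by auto
  have par: "odd (sigma n i k j div c) = odd (q (t j))" if "j \<in> {1..n}" for j
  proof -
    consider "j = i - 1" | "j = i" | "j \<noteq> i - 1 \<and> j \<noteq> i" by blast
    then show ?thesis
    proof cases
      case 1
      have "sigma n i k j div c = 2 * q (i - 1) - q i"
        using 1 ne dv[of i] dv[of "i - 1"] by (simp add: sigma_i q_def div_mult_swap)
      then show ?thesis using 1 ne by (simp add: t_def)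
    next
      case 2 then show ?thesis using ne by (simp add: sigma_i t_def q_def)
    next
      case 3 then show ?thesis using ne by (simp add: sigma_i t_def q_def)
    qed
  qed
  have A: "alph n k = card {j\<in>{1..n}. odd (q j)}" unfolding alph_q q_def c_def ..
  have A': "alph n (sigma n i k) = card {j\<in>{1..n}. odd (sigma n i k j div c)}"
    unfolding alph_q gam_sigmai[OF assms] c_def ..
  have "bij_betw t {j\<in>{1..n}. odd (q j)} {j\<in>{1..n}. odd (sigma n i k j div c)}"
  proof (rule bij_betw_byWitness[where f'=t])
    show "\<forall>a\<in>{j \<in> {1..n}. odd (q j)}. t (t a) = a" using tt by simp
    show "\<forall>a\<in>{j \<in> {1..n}. odd (sigma n i k j div c)}. t (t a) = a" using tt by simp
    show "t ` {j \<in> {1..n}. odd (q j)} \<subseteq> {j \<in> {1..n}. odd (sigma n i k j div c)}"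
    proof
      fix x assume "x \<in> t ` {j \<in> {1..n}. odd (q j)}"
      then obtain j where j: "j \<in> {1..n}" "odd (q j)" "x = t j" by auto
      then show "x \<in> {j \<in> {1..n}. odd (sigma n i k j div c)}" using tr[OF j(1)] par[OF tr[OF j(1)]] tt by simp
    qed
    show "t ` {j \<in> {1..n}. odd (sigma n i k j div c)} \<subseteq> {j \<in> {1..n}. odd (q j)}"
    proof
      fix x assume "x \<in> t ` {j \<in> {1..n}. odd (sigma n i k j div c)}"
      then obtain j where j: "j \<in> {1..n}" "odd (sigma n i k j div c)" "x = t j" by auto
      then show "x \<in> {j \<in> {1..n}. odd (q j)}" using tr[OF j(1)] par[OF j(1)] by simp
    qed
  qed
  then have "alph n (sigma n i k) = alph n k" unfolding A A' by (simp add: bij_betw_same_card)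
  then show ?thesis by (simp add: delt_def)
qed

lemma Ggroup_inv:
  assumes "g \<in> Ggroup n" "2 \<le> n"
  shows "bij_betw g (zvec n) (zvec n) \<and> (\<forall>k\<in>zvec n. gam n (g k) = gam n k \<and> delt n (g k) = delt n k)"
  using assms(1)
proof (induction rule: Ggroup.induct)
  case (gen i)
  show ?case
  proof (cases "i = 1")
    case True
    then show ?thesis using bij_sigma1 gam_sigma1 delt_sigma1 assms(2) by simp
  next
    case False
    then have "2 \<le> i" using gen by simp
    then show ?thesis using bij_sigmai gam_sigmai delt_sigmai gen by simp
  qed
next
  case ident
  show ?case by (auto simp: bij_betw_def)
next
  case (comp g h)
  then have "bij_betw (g \<circ> h) (zvec n) (zvec n)" by (blast intro: bij_betw_trans)
  moreover have "\<forall>k\<in>zvec n. gam n ((g \<circ> h) k) = gam n k \<and> delt n ((g \<circ> h) k) = delt n k"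
    using comp by (auto dest: bij_betwE)
  ultimately show ?case by blast
next
  case (inverse g)
  then have b: "bij_betw g (zvec n) (zvec n)" and I: "\<forall>k\<in>zvec n. gam n (g k) = gam n k \<and> delt n (g k) = delt n k" by auto
  have bi: "bij_betw (inv_into (zvec n) g) (zvec n) (zvec n)" using b by (rule bij_betw_inv_into)
  have "gam n (inv_into (zvec n) g k) = gam n k \<and> delt n (inv_into (zvec n) g k) = delt n k" if k: "k \<in> zvec n" for k
  proof -
    define m where "m = inv_into (zvec n) g k"
    have m: "m \<in> zvec n" unfolding m_def using bi k by (blast dest: bij_betwE)
    have gm: "g m = k" unfolding m_def using b k by (simp add: bij_betw_def f_inv_into_f)
    show ?thesis using I m gm unfolding m_def[symmetric] by metis
  qed
  then show ?case using bi by simp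
qed

theorem mainTheorem4:
  fixes s :: nat and g :: "(nat \<Rightarrow> int) \<Rightarrow> (nat \<Rightarrow> int)" and k :: "nat \<Rightarrow> int"
  assumes "s \<ge> 1"
    and "g \<in> Ggroup (2 * s)"
    and "k \<in> zvec (2 * s)"
    and "\<exists>i\<in>{1..2 * s}. k i \<noteq> 0"
  shows "delt (2 * s) (g k) = delt (2 * s) k \<and> gam (2 * s) (g k) = gam (2 * s) k"
  using Ggroup_inv[OF assms(2)] assms(1,3) by auto

end
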